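(* Fix $p\in[0,\infty]$, a dynamic monetary risk measure $(R_t)_{t=0}^{T-1}$, a dynamic monetary utility function $(U_t)_{t=0}^{T-1}$, $\eta_t\in L^0(\mathcal{F}_t)$ with $\eta_t>0$, and $W_t$ as in the context. For $t\in\{1,\dots,T\}$ define $\phi_{t,T}:\mathcal{R}^p_{t,T}\to L^p(\mathcal{F}_t)$ by $$\phi_{t,T}(Y):=-W_t\circ\dots\circ W_{T-1}(-Y_T)$$ (for $t=T$ the empty composition is the identity). Then each $\phi_{t,T}$ satisfies: $\phi_{t,T}(0)=0$; $\phi_{t,T}(Y)\le\phi_{t,T}(\widetilde Y)$ for all $Y,\widetilde Y\in\mathcal{R}^p_{t,T}$ with $Y\le\widetilde Y$ (componentwise); and $\phi_{t,T}(Y+m1_{[t,T]})=\phi_{t,T}(Y)+m$ for all $Y\in\mathcal{R}^p_{t,T}$ and $m\in L^p(\mathcal{F}_t)$. Moreover, $(\phi_{t,T})_{t=1}^T$ is time-consistent in the sense that $$\phi_{t,T}(Y)=\phi_{t,T}\big(Y1_{[t,u)}+\phi_{u,T}(Y)1_{[u,T]}\big)$$ for every $t\le u\le T$ and all $Y\in\mathcal{R}^p_{t,T}$.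
   Context: Let $T\ge 1$ and $(\Omega,\mathcal{F},\mathbb{F},\mathbb{P})$ a filtered probability space with $\mathbb{F}=(\mathcal{F}_t)_{t=0}^T$, $\{\emptyset,\Omega\}=\mathcal{F}_0\subseteq\dots\subseteq\mathcal{F}_T=\mathcal{F}$. $L^0(\mathcal{F}_t)$: real $\mathcal{F}_t$-measurable random variables; $L^p(\mathcal{F}_t)$ ($p\in(0,\infty)$): those with $\mathbb{E}|Y|^p<\infty$; $L^\infty(\mathcal{F}_t)$: essentially bounded ones; $L^p_+$: nonnegative elements. (In)equalities are a.s.; $x_+=\max(x,0)$. A dynamic monetary risk measure: maps $R_t:L^p(\mathcal{F}_{t+1})\to L^p(\mathcal{F}_t)$, $t=0,\dots,T-1$, with $R_t(Y+\lambda)=R_t(Y)-\lambda$ ($\lambda\in L^p(\mathcal{F}_t)$), $Y\le\widetilde Y\Rightarrow R_t(Y)\ge R_t(\widetilde Y)$, $R_t(cY)=cR_t(Y)$ ($c\in L^p_+(\mathcal{F}_t)$). A dynamic monetary utility function: maps $U_t:L^p(\mathcal{F}_{t+1})\to L^p(\mathcal{F}_t)$ with $U_t(Y+\lambda)=U_t(Y)+\lambda$, $Y\le\widetilde Y\Rightarrow U_t(Y)\le U_t(\widetilde Y)$, $U_t(cY)=cU_t(Y)$. $W_t(Y):=R_t(-Y)-\frac{1}{1+\eta_t}U_t((R_t(-Y)-Y)_+)$ for $Y\in L^p(\mathcal{F}_{t+1})$. $\mathcal{R}^p_{1,T}$ is the space of $\mathbb{F}$-adapted processes $(Y_s)_{s=1}^T$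 with $Y_s\in L^p(\mathcal{F}_s)$. For $1\le u\le v\le T$, $\pi_{u,v}:\mathcal{R}^p_{1,T}\to\mathcal{R}^p_{1,T}$ is $\pi_{u,v}(Y)_s:=1_{u\le s}Y_{s\wedge v}$, and $\mathcal{R}^p_{u,v}:=\pi_{u,v}\mathcal{R}^p_{1,T}$. For a process $Y$ and an interval $I$, $Y1_I$ is the process $s\mapsto 1_{s\in I}Y_s$, and for a random variable $m$, $m1_I$ is the process $s\mapsto 1_{s\in I}m$. *)

theory Defs
  imports "HOL-Probability.Probability"
begin

text \<open>Random variables are represented by functions; (in)equalities are almost sure (AE w.r.t. M).
  A sigma-algebra of the filtration is a measure F t on the same space as M.\<close>

definition filtered_prob_space :: "'a measure \<Rightarrow> (nat \<Rightarrow> 'a measure) \<Rightarrow> nat \<Rightarrow> bool" where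
  "filtered_prob_space M F T \<longleftrightarrow>
     prob_space M \<and>
     (\<forall>t\<le>T. space (F t) = space M \<and> sets (F t) \<subseteq> sets M) \<and>
     (\<forall>s t. s \<le> t \<longrightarrow> t \<le> T \<longrightarrow> sets (F s) \<subseteq> sets (F t)) \<and>
     sets (F 0) = {{}, space M} \<and> sets (F T) = sets M"

definition Lp :: "'a measure \<Rightarrow> 'a measure \<Rightarrow> ennreal \<Rightarrow> ('a \<Rightarrow> real) set" where
  "Lp M N p = {Y. Y \<in> borel_measurable N \<and>
      (p = 0 \<or>
       (p = \<infinity> \<and> (\<exists>C. AE x in M. \<bar>Y x\<bar> \<le> C)) \<or>
       (0 < p \<and> p < \<infinity> \<and> integrable M (\<lambda>x. \<bar>Y x\<bar> powr enn2real p)))}"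

definition dyn_risk_measure ::
  "'a measure \<Rightarrow> (nat \<Rightarrow> 'a measure) \<Rightarrow> nat \<Rightarrow> ennreal \<Rightarrow> (nat \<Rightarrow> ('a \<Rightarrow> real) \<Rightarrow> ('a \<Rightarrow> real)) \<Rightarrow> bool" where
  "dyn_risk_measure M F T p R \<longleftrightarrow> (\<forall>t<T.
     (\<forall>Y\<in>Lp M (F (Suc t)) p. R t Y \<in> Lp M (F t) p) \<and>
     (\<forall>Y\<in>Lp M (F (Suc t)) p. \<forall>l\<in>Lp M (F t) p.
        AE x in M. R t (\<lambda>w. Y w + l w) x = R t Y x - l x) \<and>
     (\<forall>Y\<in>Lp M (F (Suc t)) p. \<forall>Y'\<in>Lp M (F (Suc t)) p.
        (AE x in M. Y x \<le> Y' x) \<longrightarrow> (AE x in M. R t Y x \<ge> R t Y' x)) \<and>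
     (\<forall>Y\<in>Lp M (F (Suc t)) p. \<forall>c\<in>Lp M (F t) p.
        (AE x in M. c x \<ge> 0) \<longrightarrow> (\<lambda>w. c w * Y w) \<in> Lp M (F (Suc t)) p \<longrightarrow>
        (AE x in M. R t (\<lambda>w. c w * Y w) x = c x * R t Y x)))"

definition dyn_utility ::
  "'a measure \<Rightarrow> (nat \<Rightarrow> 'a measure) \<Rightarrow> nat \<Rightarrow> ennreal \<Rightarrow> (nat \<Rightarrow> ('a \<Rightarrow> real) \<Rightarrow> ('a \<Rightarrow> real)) \<Rightarrow> bool" where
  "dyn_utility M F T p U \<longleftrightarrow> (\<forall>t<T.
     (\<forall>Y\<in>Lp M (F (Suc t)) p. U t Y \<in> Lp M (F t) p) \<and>
     (\<forall>Y\<in>Lp M (F (Suc t)) p. \<forall>l\<in>Lp M (F t) p.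
        AE x in M. U t (\<lambda>w. Y w + l w) x = U t Y x + l x) \<and>
     (\<forall>Y\<in>Lp M (F (Suc t)) p. \<forall>Y'\<in>Lp M (F (Suc t)) p.
        (AE x in M. Y x \<le> Y' x) \<longrightarrow> (AE x in M. U t Y x \<le> U t Y' x)) \<and>
     (\<forall>Y\<in>Lp M (F (Suc t)) p. \<forall>c\<in>Lp M (F t) p.
        (AE x in M. c x \<ge> 0) \<longrightarrow> (\<lambda>w. c w * Y w) \<in> Lp M (F (Suc t)) p \<longrightarrow>
        (AE x in M. U t (\<lambda>w. c w * Y w) x = c x * U t Y x)))"

definition Wmap :: "(nat \<Rightarrow> ('a \<Rightarrow> real) \<Rightarrow> ('a \<Rightarrow> real)) \<Rightarrow> (nat \<Rightarrow> ('a \<Rightarrow> real) \<Rightarrow> ('a \<Rightarrow> real))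
    \<Rightarrow> (nat \<Rightarrow> 'a \<Rightarrow> real) \<Rightarrow> nat \<Rightarrow> ('a \<Rightarrow> real) \<Rightarrow> ('a \<Rightarrow> real)" where
  "Wmap R U \<eta> t Y = (\<lambda>x. R t (\<lambda>w. - Y w) x
      - (1 / (1 + \<eta> t x)) * U t (\<lambda>w. max (R t (\<lambda>v. - Y v) w - Y w) 0) x)"

primrec Witer :: "(nat \<Rightarrow> ('a \<Rightarrow> real) \<Rightarrow> ('a \<Rightarrow> real)) \<Rightarrow> nat \<Rightarrow> nat \<Rightarrow> ('a \<Rightarrow> real) \<Rightarrow> ('a \<Rightarrow> real)" where
  "Witer W t 0 = id"
| "Witer W t (Suc k) = W t \<circ> Witer W (Suc t) k"

definition phi :: "(nat \<Rightarrow> ('a \<Rightarrow> real) \<Rightarrow> ('a \<Rightarrow> real)) \<Rightarrow> (nat \<Rightarrow> ('a \<Rightarrow> real) \<Rightarrow> ('a \<Rightarrow> real))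
    \<Rightarrow> (nat \<Rightarrow> 'a \<Rightarrow> real) \<Rightarrow> nat \<Rightarrow> nat \<Rightarrow> (nat \<Rightarrow> 'a \<Rightarrow> real) \<Rightarrow> ('a \<Rightarrow> real)" where
  "phi R U \<eta> T t Y = (\<lambda>x. - Witer (Wmap R U \<eta>) t (T - t) (\<lambda>w. - Y T w) x)"

definition Rp :: "'a measure \<Rightarrow> (nat \<Rightarrow> 'a measure) \<Rightarrow> ennreal \<Rightarrow> nat \<Rightarrow> nat \<Rightarrow> (nat \<Rightarrow> 'a \<Rightarrow> real) set" where
  "Rp M F p T t = {Y. \<forall>s\<in>{1..T}. Y s \<in> Lp M (F s) p \<and> (s < t \<longrightarrow> Y s = (\<lambda>x. 0))}"

end

theory Submission
  imports Defs
begin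

lemma powr_add_bound:
  fixes a b q :: real assumes "q > 0"
  shows "\<bar>a + b\<bar> powr q \<le> 2 powr q * (\<bar>a\<bar> powr q + \<bar>b\<bar> powr q)"
proof -
  have "\<bar>a + b\<bar> \<le> 2 * max \<bar>a\<bar> \<bar>b\<bar>" by auto
  hence "\<bar>a + b\<bar> powr q \<le> (2 * max \<bar>a\<bar> \<bar>b\<bar>) powr q"
    using assms by (intro powr_mono2) auto
  also have "\<dots> = 2 powr q * max \<bar>a\<bar> \<bar>b\<bar> powr q" by (simp add: powr_mult)
  also have "max \<bar>a\<bar> \<bar>b\<bar> powr q \<le> \<bar>a\<bar> powr q + \<bar>b\<bar> powr q"
    by (cases "\<bar>a\<bar> \<le> \<bar>b\<bar>") (auto simp: max_def)
  finally show ?thesis by (simp add: mult_left_mono)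
qed

lemma aux_ineq:
  fixes c r r' a a' :: real
  assumes "0 \<le> c \<and> c \<le> 1" "r \<le> r'" "a' \<le> a + (r' - r)"
  shows "r - c * a \<le> r' - c * a'"
proof -
  have "c * a' \<le> c * (a + (r' - r))" using assms by (intro mult_left_mono) auto
  moreover have "c * (r' - r) \<le> r' - r" using assms by (intro mult_left_le_one_le) auto
  ultimately show ?thesis by (simp add: algebra_simps)
qed

locale setting =
  fixes M :: "'a measure" and F :: "nat \<Rightarrow> 'a measure" and T :: nat and p :: ennreal
    and R U :: "nat \<Rightarrow> ('a \<Rightarrow> real) \<Rightarrow> ('a \<Rightarrow> real)" and \<eta> :: "nat \<Rightarrow> 'a \<Rightarrow> real"
  assumes fps: "filtered_prob_space M F T"
    and drm: "dyn_risk_measure M F T p R"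
    and du: "dyn_utility M F T p U"
    and eta: "\<forall>s<T. \<eta> s \<in> borel_measurable (F s) \<and> (AE x in M. \<eta> s x > 0)"
begin

abbreviation "L s \<equiv> Lp M (F s) p"

lemma ps: "prob_space M" using fps unfolding filtered_prob_space_def by auto

lemma sub: "s \<le> T \<Longrightarrow> subalgebra M (F s)"
  using fps unfolding filtered_prob_space_def subalgebra_def by auto

lemma sub2: "s \<le> s' \<Longrightarrow> s' \<le> T \<Longrightarrow> subalgebra (F s') (F s)"
  using fps unfolding filtered_prob_space_def subalgebra_def by auto

lemma L_meas: "s \<le> T \<Longrightarrow> Y \<in> L s \<Longrightarrow> Y \<in> borel_measurable M"
  unfolding Lp_def using sub measurable_from_subalg by blast

lemma L_mono: "s \<le> s' \<Longrightarrow> s' \<le> T \<Longrightarrow> Y \<in> L s \<Longrightarrow> Y \<in> L s'"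
  unfolding Lp_def using sub2 measurable_from_subalg by blast

lemma L_dom:
  assumes s: "s \<le> T" and Y: "Y \<in> borel_measurable (F s)" and Z: "Z \<in> L s"
    and ae: "AE x in M. \<bar>Y x\<bar> \<le> \<bar>Z x\<bar>"
  shows "Y \<in> L s"
proof -
  have YM: "Y \<in> borel_measurable M" using Y sub[OF s] measurable_from_subalg by blast
  consider "p = 0" | "p = \<infinity> \<and> (\<exists>C. AE x in M. \<bar>Z x\<bar> \<le> C)"
    | "0 < p \<and> p < \<infinity> \<and> integrable M (\<lambda>x. \<bar>Z x\<bar> powr enn2real p)"
    using Z unfolding Lp_def by blast
  then show ?thesis
  proof cases
    case 1 then show ?thesis using Y unfolding Lp_def by auto
  next
    case 2
    then obtain C where "AE x in M. \<bar>Z x\<bar> \<le> C" by auto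
    with ae have "AE x in M. \<bar>Y x\<bar> \<le> C" by eventually_elim auto
    then show ?thesis using Y 2 unfolding Lp_def by auto
  next
    case 3
    have q: "enn2real p > 0" using 3 by (simp add: enn2real_positive_iff)
    have "integrable M (\<lambda>x. \<bar>Y x\<bar> powr enn2real p)"
    proof (rule Bochner_Integration.integrable_bound[OF conjunct2[OF conjunct2[OF 3]]])
      show "(\<lambda>x. \<bar>Y x\<bar> powr enn2real p) \<in> borel_measurable M" using YM by measurable
      show "AE x in M. norm (\<bar>Y x\<bar> powr enn2real p) \<le> norm (\<bar>Z x\<bar> powr enn2real p)"
        using ae by eventually_elim (use q in \<open>auto intro: powr_mono2\<close>)
    qed
    then show ?thesis using Y 3 unfolding Lp_def by auto
  qed
qed

lemma L_add:
  assumes s: "s \<le> T" and Y: "Y \<in> L s" and Z: "Z \<in> L s"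
  shows "(\<lambda>x. Y x + Z x) \<in> L s"
proof -
  have Ym: "Y \<in> borel_measurable (F s)" "Z \<in> borel_measurable (F s)" using Y Z unfolding Lp_def by auto
  have YM: "Y \<in> borel_measurable M" "Z \<in> borel_measurable M" using L_meas s Y Z by auto
  have m: "(\<lambda>x. Y x + Z x) \<in> borel_measurable (F s)" using Ym by measurable
  consider "p = 0" | "p = \<infinity>" | "0 < p \<and> p < \<infinity>"
    by (metis infinity_ennreal_def less_top not_gr_zero)
  then show ?thesis
  proof cases
    case 1 then show ?thesis using m unfolding Lp_def by auto
  next
    case 2
    then obtain C D where "AE x in M. \<bar>Y x\<bar> \<le> C" "AE x in M. \<bar>Z x\<bar> \<le> D"
      using Y Z unfolding Lp_def by auto
    then have "AE x in M. \<bar>Y x + Z x\<bar> \<le> C + D" by eventually_elim auto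
    then show ?thesis using m 2 unfolding Lp_def by auto
  next
    case 3
    have q: "enn2real p > 0" using 3 by (simp add: enn2real_positive_iff)
    have iY: "integrable M (\<lambda>x. \<bar>Y x\<bar> powr enn2real p)"
      and iZ: "integrable M (\<lambda>x. \<bar>Z x\<bar> powr enn2real p)"
      using Y Z 3 unfolding Lp_def by auto
    have "integrable M (\<lambda>x. \<bar>Y x + Z x\<bar> powr enn2real p)"
    proof (rule Bochner_Integration.integrable_bound)
      show "integrable M (\<lambda>x. 2 powr enn2real p * (\<bar>Y x\<bar> powr enn2real p + \<bar>Z x\<bar> powr enn2real p))"
        using iY iZ by auto
      show "(\<lambda>x. \<bar>Y x + Z x\<bar> powr enn2real p) \<in> borel_measurable M" using YM by measurable
      show "AE x in M. norm (\<bar>Y x + Z x\<bar> powr enn2real p)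
          \<le> norm (2 powr enn2real p * (\<bar>Y x\<bar> powr enn2real p + \<bar>Z x\<bar> powr enn2real p))"
        using powr_add_bound[OF q] by auto
    qed
    then show ?thesis using m 3 unfolding Lp_def by auto
  qed
qed

lemma L_uminus: "s \<le> T \<Longrightarrow> Y \<in> L s \<Longrightarrow> (\<lambda>x. - Y x) \<in> L s"
  by (rule L_dom) (auto simp: Lp_def)

lemma L_diff: "s \<le> T \<Longrightarrow> Y \<in> L s \<Longrightarrow> Z \<in> L s \<Longrightarrow> (\<lambda>x. Y x - Z x) \<in> L s"
  using L_add[of s Y "\<lambda>x. - Z x"] L_uminus by auto

lemma L_max0: "s \<le> T \<Longrightarrow> Y \<in> L s \<Longrightarrow> (\<lambda>x. max (Y x) 0) \<in> L s"
  by (rule L_dom[where Z=Y]) (auto simp: Lp_def)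

lemma L_zero: "(\<lambda>x. 0) \<in> L s"
  unfolding Lp_def by (cases "p = \<infinity>") (auto simp: less_top[symmetric])


lemma R_L: assumes "s < T" "Y \<in> L (Suc s)" shows "R s Y \<in> L s"
  by (rule drm[unfolded dyn_risk_measure_def, rule_format, OF assms(1), THEN conjunct1, rule_format, OF assms(2)])
lemma R_trans: assumes "s < T" "Y \<in> L (Suc s)" "l \<in> L s"
  shows "AE x in M. R s (\<lambda>w. Y w + l w) x = R s Y x - l x"
  by (rule drm[unfolded dyn_risk_measure_def, rule_format, OF assms(1), THEN conjunct2, THEN conjunct1, rule_format, OF assms(2,3)])
lemma R_mono: assumes "s < T" "Y \<in> L (Suc s)" "Y' \<in> L (Suc s)" "AE x in M. Y x \<le> Y' x"
  shows "AE x in M. R s Y x \<ge> R s Y' x"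
  by (rule drm[unfolded dyn_risk_measure_def, rule_format, OF assms(1), THEN conjunct2, THEN conjunct2, THEN conjunct1, rule_format, OF assms(2,3,4)])
lemma R_hom: assumes "s < T" "Y \<in> L (Suc s)" "c \<in> L s" "AE x in M. c x \<ge> 0" "(\<lambda>w. c w * Y w) \<in> L (Suc s)"
  shows "AE x in M. R s (\<lambda>w. c w * Y w) x = c x * R s Y x"
  by (rule drm[unfolded dyn_risk_measure_def, rule_format, OF assms(1), THEN conjunct2, THEN conjunct2, THEN conjunct2, rule_format, OF assms(2,3,4,5)])
lemma R_cong: assumes "s < T" "Y \<in> L (Suc s)" "Y' \<in> L (Suc s)" "AE x in M. Y x = Y' x"
  shows "AE x in M. R s Y x = R s Y' x"
proof -
  have "AE x in M. Y x \<le> Y' x" "AE x in M. Y' x \<le> Y x" using assms(4) by auto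
  then have "AE x in M. R s Y x \<ge> R s Y' x" "AE x in M. R s Y' x \<ge> R s Y x"
    using R_mono assms by auto
  then show ?thesis by eventually_elim auto
qed
lemma R_zero: assumes "s < T" shows "AE x in M. R s (\<lambda>w. 0) x = 0"
proof -
  have "AE x in M. R s (\<lambda>w. (\<lambda>w. 0) w * (\<lambda>w. 0) w) x = (\<lambda>w. 0) x * R s (\<lambda>w. 0) x"
    by (rule R_hom[OF assms L_zero L_zero]) (auto simp: L_zero)
  then show ?thesis by simp
qed

lemma U_L: assumes "s < T" "Y \<in> L (Suc s)" shows "U s Y \<in> L s"
  by (rule du[unfolded dyn_utility_def, rule_format, OF assms(1), THEN conjunct1, rule_format, OF assms(2)])
lemma U_trans: assumes "s < T" "Y \<in> L (Suc s)" "l \<in> L s"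
  shows "AE x in M. U s (\<lambda>w. Y w + l w) x = U s Y x + l x"
  by (rule du[unfolded dyn_utility_def, rule_format, OF assms(1), THEN conjunct2, THEN conjunct1, rule_format, OF assms(2,3)])
lemma U_mono: assumes "s < T" "Y \<in> L (Suc s)" "Y' \<in> L (Suc s)" "AE x in M. Y x \<le> Y' x"
  shows "AE x in M. U s Y x \<le> U s Y' x"
  by (rule du[unfolded dyn_utility_def, rule_format, OF assms(1), THEN conjunct2, THEN conjunct2, THEN conjunct1, rule_format, OF assms(2,3,4)])
lemma U_hom: assumes "s < T" "Y \<in> L (Suc s)" "c \<in> L s" "AE x in M. c x \<ge> 0" "(\<lambda>w. c w * Y w) \<in> L (Suc s)"
  shows "AE x in M. U s (\<lambda>w. c w * Y w) x = c x * U s Y x"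
  by (rule du[unfolded dyn_utility_def, rule_format, OF assms(1), THEN conjunct2, THEN conjunct2, THEN conjunct2, rule_format, OF assms(2,3,4,5)])
lemma U_cong: assumes "s < T" "Y \<in> L (Suc s)" "Y' \<in> L (Suc s)" "AE x in M. Y x = Y' x"
  shows "AE x in M. U s Y x = U s Y' x"
proof -
  have "AE x in M. Y x \<le> Y' x" "AE x in M. Y' x \<le> Y x" using assms(4) by auto
  then have "AE x in M. U s Y x \<le> U s Y' x" "AE x in M. U s Y' x \<le> U s Y x"
    using U_mono assms by auto
  then show ?thesis by eventually_elim auto
qed
lemma U_zero: assumes "s < T" shows "AE x in M. U s (\<lambda>w. 0) x = 0"
proof -
  have "AE x in M. U s (\<lambda>w. (\<lambda>w. 0) w * (\<lambda>w. 0) w) x = (\<lambda>w. 0) x * U s (\<lambda>w. 0) x"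
    by (rule U_hom[OF assms L_zero L_zero]) (auto simp: L_zero)
  then show ?thesis by simp
qed

abbreviation "W \<equiv> Wmap R U \<eta>"

lemma c_meas: assumes "s < T" shows "(\<lambda>x. 1 / (1 + \<eta> s x)) \<in> borel_measurable (F s)"
proof -
  have "\<eta> s \<in> borel_measurable (F s)" using eta assms by auto
  then show ?thesis by measurable
qed

lemma c_bounds: "s < T \<Longrightarrow> AE x in M. 0 \<le> 1 / (1 + \<eta> s x) \<and> 1 / (1 + \<eta> s x) \<le> 1"
proof -
  assume "s < T"
  then have "AE x in M. \<eta> s x > 0" using eta by auto
  then show ?thesis by eventually_elim auto
qed

lemma W_L: assumes s: "s < T" and Y: "Y \<in> L (Suc s)" shows "W s Y \<in> L s"
proof -
  have sT: "s \<le> T" "Suc s \<le> T" using s by auto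
  define \<rho> where "\<rho> = R s (\<lambda>w. - Y w)"
  have \<rho>: "\<rho> \<in> L s" unfolding \<rho>_def using R_L[OF s] L_uminus[OF sT(2) Y] by auto
  have \<rho>': "\<rho> \<in> L (Suc s)" using L_mono[OF _ sT(2) \<rho>] by auto
  have A: "(\<lambda>w. max (\<rho> w - Y w) 0) \<in> L (Suc s)" using L_max0[OF sT(2)] L_diff[OF sT(2) \<rho>' Y] by auto
  define V where "V = U s (\<lambda>w. max (\<rho> w - Y w) 0)"
  have V: "V \<in> L s" unfolding V_def using U_L[OF s A] .
  have cV: "(\<lambda>x. 1 / (1 + \<eta> s x) * V x) \<in> L s"
  proof (rule L_dom[OF sT(1) _ V])
    show "(\<lambda>x. 1 / (1 + \<eta> s x) * V x) \<in> borel_measurable (F s)"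
    proof -
      have "V \<in> borel_measurable (F s)" using V unfolding Lp_def by auto
      then show ?thesis using c_meas[OF s] by measurable
    qed
    show "AE x in M. \<bar>1 / (1 + \<eta> s x) * V x\<bar> \<le> \<bar>V x\<bar>"
      using c_bounds[OF s] by eventually_elim (metis abs_ge_zero abs_mult abs_of_nonneg mult_left_le_one_le)
  qed
  have "W s Y = (\<lambda>x. \<rho> x - 1 / (1 + \<eta> s x) * V x)"
    unfolding Wmap_def \<rho>_def V_def by simp
  then show ?thesis using L_diff[OF sT(1) \<rho> cV] by simp
qed

lemma W_mono: assumes s: "s < T" and Y: "Y \<in> L (Suc s)" and Y': "Y' \<in> L (Suc s)"
  and le: "AE x in M. Y x \<le> Y' x"
  shows "AE x in M. W s Y x \<le> W s Y' x"
proof -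
  have sT: "s \<le> T" "Suc s \<le> T" using s by auto
  define \<rho> where "\<rho> = R s (\<lambda>w. - Y w)"
  define \<rho>' where "\<rho>' = R s (\<lambda>w. - Y' w)"
  have \<rho>: "\<rho> \<in> L s" unfolding \<rho>_def using R_L[OF s] L_uminus[OF sT(2) Y] by auto
  have \<rho>1: "\<rho> \<in> L (Suc s)" using L_mono[OF _ sT(2) \<rho>] by auto
  have \<rho>': "\<rho>' \<in> L s" unfolding \<rho>'_def using R_L[OF s] L_uminus[OF sT(2) Y'] by auto
  have \<rho>1': "\<rho>' \<in> L (Suc s)" using L_mono[OF _ sT(2) \<rho>'] by auto
  define A where "A = (\<lambda>w. max (\<rho> w - Y w) 0)"
  define A' where "A' = (\<lambda>w. max (\<rho>' w - Y' w) 0)"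
  define B where "B = (\<lambda>w. max (\<rho>' w - Y w) 0)"
  define \<delta> where "\<delta> = (\<lambda>w. \<rho>' w - \<rho> w)"
  have A: "A \<in> L (Suc s)" unfolding A_def using L_max0[OF sT(2)] L_diff[OF sT(2) \<rho>1 Y] by auto
  have A': "A' \<in> L (Suc s)" unfolding A'_def using L_max0[OF sT(2)] L_diff[OF sT(2) \<rho>1' Y'] by auto
  have B: "B \<in> L (Suc s)" unfolding B_def using L_max0[OF sT(2)] L_diff[OF sT(2) \<rho>1' Y] by auto
  have \<delta>: "\<delta> \<in> L s" unfolding \<delta>_def using L_diff[OF sT(1) \<rho>' \<rho>] by auto
  have \<delta>1: "\<delta> \<in> L (Suc s)" using L_mono[OF _ sT(2) \<delta>] by auto
  have Ad: "(\<lambda>w. A w + \<delta> w) \<in> L (Suc s)" using L_add[OF sT(2) A \<delta>1] .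
  have h1: "AE x in M. \<rho> x \<le> \<rho>' x"
  proof -
    have "AE x in M. - Y' x \<le> - Y x" using le by eventually_elim auto
    then show ?thesis unfolding \<rho>_def \<rho>'_def
      using R_mono[OF s L_uminus[OF sT(2) Y'] L_uminus[OF sT(2) Y]] by auto
  qed
  have h2: "AE x in M. U s A' x \<le> U s B x"
  proof (rule U_mono[OF s A' B])
    show "AE x in M. A' x \<le> B x" using le unfolding A'_def B_def by eventually_elim auto
  qed
  have h3: "AE x in M. U s B x \<le> U s (\<lambda>w. A w + \<delta> w) x"
  proof (rule U_mono[OF s B Ad])
    show "AE x in M. B x \<le> A x + \<delta> x" using h1 unfolding A_def B_def \<delta>_def by eventually_elim auto
  qed
  have h4: "AE x in M. U s (\<lambda>w. A w + \<delta> w) x = U s A x + \<delta> x" using U_trans[OF s A \<delta>] .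
  have h5: "AE x in M. 0 \<le> 1 / (1 + \<eta> s x) \<and> 1 / (1 + \<eta> s x) \<le> 1" using c_bounds[OF s] .
  have "AE x in M. \<rho> x - 1 / (1 + \<eta> s x) * U s A x \<le> \<rho>' x - 1 / (1 + \<eta> s x) * U s A' x"
    using h1 h2 h3 h4 h5
  proof eventually_elim
    case (elim x)
    then show ?case unfolding \<delta>_def by (intro aux_ineq) auto
  qed
  then show ?thesis unfolding Wmap_def \<rho>_def \<rho>'_def A_def A'_def by simp
qed

lemma W_cong: assumes "s < T" "Y \<in> L (Suc s)" "Y' \<in> L (Suc s)" "AE x in M. Y x = Y' x"
  shows "AE x in M. W s Y x = W s Y' x"
proof -
  have "AE x in M. Y x \<le> Y' x" "AE x in M. Y' x \<le> Y x" using assms(4) by auto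
  then have "AE x in M. W s Y x \<le> W s Y' x" "AE x in M. W s Y' x \<le> W s Y x"
    using W_mono assms by auto
  then show ?thesis by eventually_elim auto
qed

lemma W_trans: assumes s: "s < T" and Y: "Y \<in> L (Suc s)" and m: "m \<in> L s"
  shows "AE x in M. W s (\<lambda>w. Y w + m w) x = W s Y x + m x"
proof -
  have sT: "s \<le> T" "Suc s \<le> T" using s by auto
  have m1: "m \<in> L (Suc s)" using L_mono[OF _ sT(2) m] by auto
  have Ym: "(\<lambda>w. Y w + m w) \<in> L (Suc s)" using L_add[OF sT(2) Y m1] .
  define \<rho> where "\<rho> = R s (\<lambda>w. - Y w)"
  define \<rho>m where "\<rho>m = R s (\<lambda>w. - (Y w + m w))"
  have \<rho>: "\<rho> \<in> L s" unfolding \<rho>_def using R_L[OF s] L_uminus[OF sT(2) Y] by auto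
  have \<rho>1: "\<rho> \<in> L (Suc s)" using L_mono[OF _ sT(2) \<rho>] by auto
  have \<rho>m: "\<rho>m \<in> L s" unfolding \<rho>m_def using R_L[OF s] L_uminus[OF sT(2) Ym] by auto
  have \<rho>m1: "\<rho>m \<in> L (Suc s)" using L_mono[OF _ sT(2) \<rho>m] by auto
  have h1: "AE x in M. \<rho>m x = \<rho> x + m x"
  proof -
    have eq: "(\<lambda>w. - (Y w + m w)) = (\<lambda>w. (\<lambda>w. - Y w) w + (\<lambda>w. - m w) w)" by auto
    have "AE x in M. R s (\<lambda>w. (\<lambda>w. - Y w) w + (\<lambda>w. - m w) w) x = R s (\<lambda>w. - Y w) x - (- m x)"
      using R_trans[OF s L_uminus[OF sT(2) Y] L_uminus[OF sT(1) m]] by simp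
    then show ?thesis unfolding \<rho>m_def \<rho>_def eq by simp
  qed
  define A where "A = (\<lambda>w. max (\<rho> w - Y w) 0)"
  define Am where "Am = (\<lambda>w. max (\<rho>m w - (Y w + m w)) 0)"
  have A: "A \<in> L (Suc s)" unfolding A_def using L_max0[OF sT(2)] L_diff[OF sT(2) \<rho>1 Y] by auto
  have Am: "Am \<in> L (Suc s)" unfolding Am_def using L_max0[OF sT(2)] L_diff[OF sT(2) \<rho>m1 Ym] by auto
  have h2: "AE x in M. U s Am x = U s A x"
  proof (rule U_cong[OF s Am A])
    show "AE x in M. Am x = A x" using h1 unfolding Am_def A_def by eventually_elim auto
  qed
  have "AE x in M. \<rho>m x - 1 / (1 + \<eta> s x) * U s Am x = \<rho> x - 1 / (1 + \<eta> s x) * U s A x + m x"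
    using h1 h2 by eventually_elim auto
  then show ?thesis unfolding Wmap_def \<rho>_def \<rho>m_def A_def Am_def by simp
qed

lemma W_zero: assumes s: "s < T" shows "AE x in M. W s (\<lambda>w. 0) x = 0"
proof -
  have sT: "s \<le> T" "Suc s \<le> T" using s by auto
  have h1: "AE x in M. R s (\<lambda>w. 0) x = 0" using R_zero[OF s] .
  have R0: "R s (\<lambda>w. 0) \<in> L (Suc s)" using L_mono[OF _ sT(2) R_L[OF s L_zero]] by auto
  have h2: "AE x in M. U s (\<lambda>w. max (R s (\<lambda>w. 0) w - 0) 0) x = U s (\<lambda>w. 0) x"
  proof (rule U_cong[OF s _ L_zero])
    show "(\<lambda>w. max (R s (\<lambda>w. 0) w - 0) 0) \<in> L (Suc s)" using L_max0[OF sT(2) R0] by simp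
    show "AE x in M. max (R s (\<lambda>w. 0) x - 0) 0 = 0" using h1 by eventually_elim auto
  qed
  show ?thesis using h1 h2 U_zero[OF s] unfolding Wmap_def by eventually_elim auto
qed

lemma Witer_L: "t + k \<le> T \<Longrightarrow> Z \<in> L (t + k) \<Longrightarrow> Witer W t k Z \<in> L t"
proof (induction k arbitrary: t)
  case 0 then show ?case by simp
next
  case (Suc k)
  have "Witer W (Suc t) k Z \<in> L (Suc t)" using Suc by auto
  then show ?case using W_L[of t] Suc.prems by simp
qed

lemma Witer_mono: "t + k \<le> T \<Longrightarrow> Z \<in> L (t + k) \<Longrightarrow> Z' \<in> L (t + k) \<Longrightarrow>
    (AE x in M. Z x \<le> Z' x) \<Longrightarrow> AE x in M. Witer W t k Z x \<le> Witer W t k Z' x"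
proof (induction k arbitrary: t)
  case 0 then show ?case by simp
next
  case (Suc k)
  have "AE x in M. Witer W (Suc t) k Z x \<le> Witer W (Suc t) k Z' x" using Suc by auto
  moreover have "Witer W (Suc t) k Z \<in> L (Suc t)" "Witer W (Suc t) k Z' \<in> L (Suc t)"
    using Suc.prems Witer_L[of "Suc t" k] by auto
  ultimately show ?case using W_mono[of t] Suc.prems by simp
qed

lemma Witer_trans: "t + k \<le> T \<Longrightarrow> Z \<in> L (t + k) \<Longrightarrow> m \<in> L t \<Longrightarrow>
    AE x in M. Witer W t k (\<lambda>w. Z w + m w) x = Witer W t k Z x + m x"
proof (induction k arbitrary: t m)
  case 0 then show ?case by simp
next
  case (Suc k)
  have m1: "m \<in> L (Suc t)" using L_mono[of t "Suc t" m] Suc.prems by auto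
  have IH: "AE x in M. Witer W (Suc t) k (\<lambda>w. Z w + m w) x = Witer W (Suc t) k Z x + m x"
    using Suc.IH[of "Suc t" m] Suc.prems m1 by auto
  have Zm: "(\<lambda>w. Z w + m w) \<in> L (t + Suc k)"
    using L_add[OF Suc.prems(1) Suc.prems(2)] L_mono[of t "t + Suc k" m] Suc.prems by auto
  have a: "Witer W (Suc t) k (\<lambda>w. Z w + m w) \<in> L (Suc t)" using Witer_L[of "Suc t" k] Suc.prems Zm by auto
  have b: "Witer W (Suc t) k Z \<in> L (Suc t)" using Witer_L[of "Suc t" k] Suc.prems by auto
  have ab: "(\<lambda>w. Witer W (Suc t) k Z w + m w) \<in> L (Suc t)" using L_add[OF _ b m1] Suc.prems by auto
  have "AE x in M. W t (Witer W (Suc t) k (\<lambda>w. Z w + m w)) x = W t (\<lambda>w. Witer W (Suc t) k Z w + m w) x"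
    using W_cong[OF _ a ab IH] Suc.prems by auto
  moreover have "AE x in M. W t (\<lambda>w. Witer W (Suc t) k Z w + m w) x = W t (Witer W (Suc t) k Z) x + m x"
    using W_trans[OF _ b Suc.prems(3)] Suc.prems by auto
  ultimately show ?case by eventually_elim simp
qed

lemma Witer_zero: "t + k \<le> T \<Longrightarrow> AE x in M. Witer W t k (\<lambda>w. 0) x = 0"
proof (induction k arbitrary: t)
  case 0 then show ?case by simp
next
  case (Suc k)
  have IH: "AE x in M. Witer W (Suc t) k (\<lambda>w. 0) x = 0" using Suc by auto
  have a: "Witer W (Suc t) k (\<lambda>w. 0) \<in> L (Suc t)" using Witer_L[of "Suc t" k] Suc.prems L_zero by auto
  have "AE x in M. W t (Witer W (Suc t) k (\<lambda>w. 0)) x = W t (\<lambda>w. 0) x"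
    using W_cong[OF _ a L_zero IH] Suc.prems by auto
  moreover have "AE x in M. W t (\<lambda>w. 0) x = 0" using W_zero[of t] Suc.prems by auto
  ultimately have "AE x in M. W t (Witer W (Suc t) k (\<lambda>w. 0)) x = 0" by eventually_elim simp
  then show ?case by simp
qed

lemma Witer_cong: assumes "t + k \<le> T" "Z \<in> L (t + k)" "Z' \<in> L (t + k)" "AE x in M. Z x = Z' x"
  shows "AE x in M. Witer W t k Z x = Witer W t k Z' x"
proof -
  have "AE x in M. Z x \<le> Z' x" "AE x in M. Z' x \<le> Z x" using assms(4) by auto
  then have "AE x in M. Witer W t k Z x \<le> Witer W t k Z' x" "AE x in M. Witer W t k Z' x \<le> Witer W t k Z x"
    using Witer_mono assms by auto
  then show ?thesis by eventually_elim auto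
qed

lemma W_id: assumes s: "s < T" and Z: "Z \<in> L s" shows "AE x in M. W s Z x = Z x"
proof -
  have "AE x in M. W s (\<lambda>w. (\<lambda>w. 0) w + Z w) x = W s (\<lambda>w. 0) x + Z x"
    using W_trans[OF s L_zero Z] .
  moreover have "AE x in M. W s (\<lambda>w. 0) x = 0" using W_zero[OF s] .
  ultimately show ?thesis by eventually_elim simp
qed

lemma Witer_id: "t + k \<le> T \<Longrightarrow> Z \<in> L t \<Longrightarrow> AE x in M. Witer W t k Z x = Z x"
proof (induction k arbitrary: t)
  case 0 then show ?case by simp
next
  case (Suc k)
  have Z1: "Z \<in> L (Suc t)" using L_mono[of t "Suc t" Z] Suc.prems by auto
  have Z2: "Z \<in> L (Suc t + k)" using L_mono[of t "Suc t + k" Z] Suc.prems by auto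
  have IH: "AE x in M. Witer W (Suc t) k Z x = Z x" using Suc.IH[of "Suc t"] Suc.prems Z1 by auto
  have a: "Witer W (Suc t) k Z \<in> L (Suc t)" using Witer_L[of "Suc t" k Z] Suc.prems Z2 by auto
  have "AE x in M. W t (Witer W (Suc t) k Z) x = W t Z x"
    using W_cong[OF _ a Z1 IH] Suc.prems by auto
  moreover have "AE x in M. W t Z x = Z x" using W_id[of t Z] Suc.prems by auto
  ultimately have "AE x in M. W t (Witer W (Suc t) k Z) x = Z x" by eventually_elim simp
  then show ?case by simp
qed

end

lemma Witer_add: "Witer Wf t (a + b) Z = Witer Wf t a (Witer Wf (t + a) b Z)"
proof (induction a arbitrary: t)
  case 0 then show ?case by simp
next
  case (Suc a)
  then show ?case by (simp add: Suc.IH[of "Suc t"])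
qed

theorem proposition3:
  fixes M :: "'a measure" and F :: "nat \<Rightarrow> 'a measure" and T t :: nat and p :: ennreal
    and R U :: "nat \<Rightarrow> ('a \<Rightarrow> real) \<Rightarrow> ('a \<Rightarrow> real)" and \<eta> :: "nat \<Rightarrow> 'a \<Rightarrow> real"
  assumes "T \<ge> 1"
    and "filtered_prob_space M F T"
    and "dyn_risk_measure M F T p R"
    and "dyn_utility M F T p U"
    and "\<forall>s<T. \<eta> s \<in> borel_measurable (F s) \<and> (AE x in M. \<eta> s x > 0)"
    and "1 \<le> t" and "t \<le> T"
  shows "(AE x in M. phi R U \<eta> T t (\<lambda>s x. 0) x = 0)
    \<and> (\<forall>Y\<in>Rp M F p T t. \<forall>Y'\<in>Rp M F p T t.
          (\<forall>s\<in>{1..T}. AE x in M. Y s x \<le> Y' s x) \<longrightarrow>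
          (AE x in M. phi R U \<eta> T t Y x \<le> phi R U \<eta> T t Y' x))
    \<and> (\<forall>Y\<in>Rp M F p T t. \<forall>m\<in>Lp M (F t) p.
          AE x in M. phi R U \<eta> T t (\<lambda>s w. Y s w + (if t \<le> s \<and> s \<le> T then m w else 0)) x
                     = phi R U \<eta> T t Y x + m x)
    \<and> (\<forall>u. t \<le> u \<and> u \<le> T \<longrightarrow> (\<forall>Y\<in>Rp M F p T t.
          AE x in M. phi R U \<eta> T t Y x
            = phi R U \<eta> T t (\<lambda>s w. (if t \<le> s \<and> s < u then Y s w else 0)
                                   + (if u \<le> s \<and> s \<le> T then phi R U \<eta> T u Y w else 0)) x))"
proof -
  interpret setting M F T p R U \<eta>
    by unfold_locales (use assms in auto)
  have tk: "t + (T - t) = T" using assms by auto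
  have tk': "t + (T - t) \<le> T" using assms by auto
  have YT: "Y T \<in> L T" if "Y \<in> Rp M F p T t" for Y
    using that assms(1) unfolding Rp_def by auto
  have YT': "Y T \<in> L (t + (T - t))" if "Y \<in> Rp M F p T t" for Y
    using YT[OF that] tk by simp
  have P1: "AE x in M. phi R U \<eta> T t (\<lambda>s x. 0) x = 0"
  proof -
    have "AE x in M. Witer W t (T - t) (\<lambda>w. 0) x = 0" using Witer_zero[OF tk'] .
    then show ?thesis unfolding phi_def by eventually_elim simp
  qed
  have P2: "AE x in M. phi R U \<eta> T t Y x \<le> phi R U \<eta> T t Y' x"
    if Y: "Y \<in> Rp M F p T t" and Y': "Y' \<in> Rp M F p T t"
      and le: "\<forall>s\<in>{1..T}. AE x in M. Y s x \<le> Y' s x" for Y Y'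
  proof -
    have a: "(\<lambda>w. - Y' T w) \<in> L (t + (T - t))" "(\<lambda>w. - Y T w) \<in> L (t + (T - t))"
      using L_uminus[OF tk' YT'[OF Y']] L_uminus[OF tk' YT'[OF Y]] by auto
    have "AE x in M. Y T x \<le> Y' T x" using le assms(1) by auto
    then have "AE x in M. - Y' T x \<le> - Y T x" by eventually_elim auto
    then have "AE x in M. Witer W t (T - t) (\<lambda>w. - Y' T w) x \<le> Witer W t (T - t) (\<lambda>w. - Y T w) x"
      using Witer_mono[OF tk' a] by auto
    then show ?thesis unfolding phi_def by eventually_elim simp
  qed
  have P3: "AE x in M. phi R U \<eta> T t (\<lambda>s w. Y s w + (if t \<le> s \<and> s \<le> T then m w else 0)) x
                     = phi R U \<eta> T t Y x + m x"
    if Y: "Y \<in> Rp M F p T t" and m: "m \<in> L t" for Y m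
  proof -
    have a: "(\<lambda>w. - Y T w) \<in> L (t + (T - t))" using L_uminus[OF tk' YT'[OF Y]] .
    have m': "(\<lambda>w. - m w) \<in> L t" using L_uminus[OF assms(7) m] .
    have eq: "(\<lambda>w. - (Y T w + (if t \<le> T \<and> T \<le> T then m w else 0))) = (\<lambda>w. (\<lambda>w. - Y T w) w + (\<lambda>w. - m w) w)"
      using assms(7) by auto
    have "AE x in M. Witer W t (T - t) (\<lambda>w. (\<lambda>w. - Y T w) w + (\<lambda>w. - m w) w) x
        = Witer W t (T - t) (\<lambda>w. - Y T w) x + - m x"
      using Witer_trans[OF tk' a m'] by simp
    then show ?thesis unfolding phi_def eq by eventually_elim simp
  qed
  have P4: "AE x in M. phi R U \<eta> T t Y x
            = phi R U \<eta> T t (\<lambda>s w. (if t \<le> s \<and> s < u then Y s w else 0)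
                                   + (if u \<le> s \<and> s \<le> T then phi R U \<eta> T u Y w else 0)) x"
    if u1: "t \<le> u" and u2: "u \<le> T" and Y: "Y \<in> Rp M F p T t" for Y u
  proof -
    have d1: "T - t = (u - t) + (T - u)" using u1 u2 by simp
    have d2: "t + (u - t) = u" using u1 by simp
    have d3: "u + (T - u) = T" using u2 by simp
    have wa: "Witer W t (T - t) Z = Witer W t (u - t) (Witer W u (T - u) Z)" for Z
    proof -
      have "Witer W t (T - t) Z = Witer W t ((u - t) + (T - u)) Z" by (simp only: d1)
      also have "\<dots> = Witer W t (u - t) (Witer W (t + (u - t)) (T - u) Z)" by (rule Witer_add)
      also have "\<dots> = Witer W t (u - t) (Witer W u (T - u) Z)" by (simp only: d2)
      finally show ?thesis .
    qed
    define Z where "Z = (\<lambda>w. - Y T w)"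
    define V where "V = Witer W u (T - u) Z"
    have Z: "Z \<in> L (u + (T - u))" unfolding Z_def d3 using L_uminus[OF _ YT[OF Y]] by simp
    have V: "V \<in> L u" unfolding V_def using Witer_L[OF _ Z] d3 by simp
    have V2: "V \<in> L (u + (T - u))" unfolding d3 using L_mono[OF u2 _ V] by simp
    have uT: "u + (T - u) \<le> T" using d3 by simp
    have ut: "t + (u - t) \<le> T" using d2 u2 by simp
    have VV: "Witer W u (T - u) V \<in> L u" using Witer_L[OF uT V2] .
    have e: "(\<lambda>w. - ((if t \<le> T \<and> T < u then Y T w else 0)
              + (if u \<le> T \<and> T \<le> T then phi R U \<eta> T u Y w else 0))) = V"
      using u2 by (auto simp: phi_def V_def Z_def)
    have l: "phi R U \<eta> T t Y = (\<lambda>x. - Witer W t (u - t) V x)"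
      unfolding phi_def[of R U \<eta> T t] V_def Z_def wa by (rule refl)
    have r: "phi R U \<eta> T t (\<lambda>s w. (if t \<le> s \<and> s < u then Y s w else 0)
                                   + (if u \<le> s \<and> s \<le> T then phi R U \<eta> T u Y w else 0))
          = (\<lambda>x. - Witer W t (u - t) (Witer W u (T - u) V) x)"
      unfolding phi_def[of R U \<eta> T t] e wa by (rule refl)
    have "AE x in M. Witer W u (T - u) V x = V x" using Witer_id[OF uT V] .
    then have "AE x in M. Witer W t (u - t) (Witer W u (T - u) V) x = Witer W t (u - t) V x"
      using Witer_cong[OF ut] VV V unfolding d2 by auto
    then show ?thesis unfolding l r by eventually_elim simp
  qed
  show ?thesis using P1 P2 P3 P4 by blast
qed

end
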